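(* Consider the Histogram Partitioning algorithm (described in the context) on $N$ distinct keys over $p$ processors, where in each round $j$ each key of $\gamma_j$ is sampled independently with probability $\frac{3p}{|\gamma_j|\log^* p}$. Then, with high probability, after $O(\log^* p)$ rounds fewer than $p/\log^* p$ splitters remain unachieved.
   Context: Setting: $N$ distinct keys from a totally ordered set are distributed across $p$ processors, $N/p$ keys per processor. For $\ell\in\{1,\dots,p-1\}$, the target range of splitter $\ell$ is the rank range $[\frac{N\ell}{p},\frac{N\ell}{p}+\frac{N}{p}]$; splitter $\ell$ is achieved in a round if some key with rank in this range is sampled in that round (and stays achieved afterwards). Histogram Partitioning proceeds in rounds; in round $j$, keys are sampled independently from a set $\gamma_j$ ($\gamma_1$ = all keys), and the global ranks of the samples are computed and made known to all processors. For each unachieved splitter $\ell$, $L_j(\ell)$ is the largest key sampled before round $j$ with rank below $\frac{N\ell}{p}$ (or the smallest key) and $U_j(\ell)$ the smallest key sampled before round $j$ with rank above $\frac{N\ell}{p}+\frac{N}{p}$ (or the largest key); $\gamma_j$ is the union over splitters $\ell$ unachieved before round $j$ of the keys between $L_j(\ell)$ and $U_j(\ell)$. $\log^* x=0$ for $x\le1$ and $\log^* x=1+\log^*(\log x)$ for $x>1$. "With high probability" means with probability tending to $1$ as $p\to\infty$. *)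

theory Defs
  imports "HOL-Probability.Probability"
begin

text \<open>Iterated logarithm (base 2): the least k such that k-fold application of log 2
  brings x to at most 1.  This is the unfolding of
  log* x = 0 for x \<le> 1 and log* x = 1 + log*(log x) for x > 1.\<close>
definition logstar :: "real \<Rightarrow> nat" where
  "logstar x = (LEAST k. ((\<lambda>y. log 2 y) ^^ k) x \<le> 1)"

text \<open>Keys are identified with their ranks 1..N.  S is the set of keys sampled so far.\<close>

definition achieved :: "nat \<Rightarrow> nat \<Rightarrow> nat set \<Rightarrow> nat \<Rightarrow> bool" where
  "achieved N p S l \<longleftrightarrow>
     (\<exists>x\<in>S. real N * l / p \<le> x \<and> real x \<le> real N * l / p + real N / p)"

definition unachieved :: "nat \<Rightarrow> nat \<Rightarrow> nat set \<Rightarrow> nat set" where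
  "unachieved N p S = {l \<in> {1..<p}. \<not> achieved N p S l}"

definition lower_bd :: "nat \<Rightarrow> nat \<Rightarrow> nat set \<Rightarrow> nat \<Rightarrow> nat" where
  "lower_bd N p S l = Max ({x \<in> S. real x < real N * l / p} \<union> {1})"

definition upper_bd :: "nat \<Rightarrow> nat \<Rightarrow> nat set \<Rightarrow> nat \<Rightarrow> nat" where
  "upper_bd N p S l = Min ({x \<in> S. real x > real N * l / p + real N / p} \<union> {N})"

definition gamma :: "nat \<Rightarrow> nat \<Rightarrow> nat set \<Rightarrow> nat set" where
  "gamma N p S = (\<Union>l\<in>unachieved N p S. {lower_bd N p S l .. upper_bd N p S l})"

definition hp_round :: "nat \<Rightarrow> nat \<Rightarrow> nat set \<Rightarrow> nat set pmf" where
  "hp_round N p S =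
     (let G = gamma N p S;
          q = min 1 (3 * real p / (real (card G) * real (logstar (real p))))
      in map_pmf (\<lambda>f. S \<union> {x \<in> G. f x}) (Pi_pmf G False (\<lambda>_. bernoulli_pmf q)))"

fun hp_rounds :: "nat \<Rightarrow> nat \<Rightarrow> nat \<Rightarrow> nat set pmf" where
  "hp_rounds N p 0 = return_pmf {}"
| "hp_rounds N p (Suc k) = bind_pmf (hp_rounds N p k) (hp_round N p)"

end

theory Submission
  imports Defs "HOL-Real_Asymp.Real_Asymp"
begin


lemma bind_bound:
  fixes M :: "'a pmf" and K :: "'a \<Rightarrow> 'b pmf"
  assumes "\<And>x. x \<in> set_pmf M \<Longrightarrow> x \<notin> B \<Longrightarrow> measure_pmf.prob (K x) A \<le> d" "d \<ge> 0"
  shows "measure_pmf.prob (bind_pmf M K) A \<le> measure_pmf.prob M B + d"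
proof -
  have "emeasure (bind_pmf M K) A = (\<integral>\<^sup>+x. emeasure (K x) A \<partial>M)" by simp
  also have "\<dots> \<le> (\<integral>\<^sup>+x. (indicator B x + ennreal d) \<partial>M)"
  proof (rule nn_integral_mono_AE)
    show "AE x in measure_pmf M. emeasure (measure_pmf (K x)) A \<le> indicator B x + ennreal d"
    proof (rule AE_pmfI)
      fix x assume x: "x \<in> set_pmf M"
      show "emeasure (measure_pmf (K x)) A \<le> indicator B x + ennreal d"
      proof (cases "x \<in> B")
        case True
        then show ?thesis
          by (metis add_increasing2 indicator_simps(1) measure_pmf.emeasure_le_1 zero_le)
      next
        case False
        then show ?thesis using assms(1)[OF x False]
          by (simp add: measure_pmf.emeasure_eq_measure ennreal_leI)
      qed
    qed
  qed
  also have "\<dots> = emeasure M B + ennreal d"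
    by (subst nn_integral_add) (auto simp: measure_pmf.emeasure_space_1)
  finally have "emeasure (bind_pmf M K) A \<le> emeasure M B + ennreal d" .
  then show ?thesis using assms(2)
    by (simp add: measure_pmf.emeasure_eq_measure ennreal_plus[symmetric] del: ennreal_plus)
qed



lemma prod_if_const: "finite G \<Longrightarrow> (\<Prod>x\<in>G. if x \<in> C then a else 1) = (a::real) ^ card (G \<inter> C)"
  by (simp add: prod.inter_restrict[symmetric])

lemma cheb_core:
  fixes G :: "'a set" and U :: "'b set" and B :: "'b \<Rightarrow> 'a set"
  assumes fG: "finite G" and fU: "finite U" and BG: "\<And>l. l \<in> U \<Longrightarrow> B l \<subseteq> G"
    and cB: "\<And>l. l \<in> U \<Longrightarrow> card (B l) = n"
    and disj: "\<And>l m. l \<in> U \<Longrightarrow> m \<in> U \<Longrightarrow> l \<noteq> m \<Longrightarrow> B l \<inter> B m = {}"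
    and q: "0 \<le> q" "q \<le> 1" and t: "t > 0"
  shows "measure_pmf.prob (Pi_pmf G False (\<lambda>_. bernoulli_pmf q))
           {f. real (card U) * (1-q)^n + t \<le> real (card {l\<in>U. \<forall>x\<in>B l. \<not> f x})}
         \<le> real (card U) / t\<^sup>2"
proof -
  define M where "M = Pi_pmf G False (\<lambda>_. bernoulli_pmf q)"
  define r where "r = (1-q)^n"
  have r01: "0 \<le> r" "r \<le> 1" using q by (auto simp: r_def power_le_one)
  have finM: "finite (set_pmf M)"
    unfolding M_def by (rule finite_subset[OF set_Pi_pmf_subset'[OF fG]]) (auto intro!: finite_PiE_dflt fG)
  have integ: "integrable (measure_pmf M) h" for h :: "_ \<Rightarrow> real"
    by (rule integrable_measure_pmf_finite[OF finM])
  define g where "g = (\<lambda>l x b. if x \<in> B l \<and> b then 0 else (1::real))"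
  define Z where "Z = (\<lambda>l f. \<Prod>x\<in>G. g l x (f x))"
  define X where "X = (\<lambda>f. \<Sum>l\<in>U. Z l f)"
  have Zind: "Z l f = (if \<forall>x\<in>B l. \<not> f x then 1 else 0)" if "l \<in> U" for l f
  proof (cases "\<forall>x\<in>B l. \<not> f x")
    case True then show ?thesis by (auto simp: Z_def g_def intro!: prod.neutral)
  next
    case False
    then obtain x where "x \<in> B l" "f x" by auto
    then show ?thesis using BG[OF that] fG by (auto simp: Z_def g_def intro!: prod_zero)
  qed
  have Xcard: "X f = real (card {l\<in>U. \<forall>x\<in>B l. \<not> f x})" for f
    unfolding X_def using fU by (simp add: Zind sum.If_cases cong: sum.cong) (metis Collect_conj_eq Int_commute Collect_mem_eq)
  have EZZ: "measure_pmf.expectation M (\<lambda>f. Z l f * Z m f) = (if l = m then r else r^2)"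
    if "l \<in> U" "m \<in> U" for l m
  proof -
    have "measure_pmf.expectation M (\<lambda>f. Z l f * Z m f) =
          measure_pmf.expectation M (\<lambda>f. \<Prod>x\<in>G. g l x (f x) * g m x (f x))"
      by (simp add: Z_def prod.distrib)
    also have "\<dots> = (\<Prod>x\<in>G. measure_pmf.expectation (bernoulli_pmf q) (\<lambda>v. g l x v * g m x v))"
      unfolding M_def
      by (rule expectation_prod_Pi_pmf[OF fG]) (auto simp: g_def integrable_measure_pmf_finite)
    also have "\<dots> = (\<Prod>x\<in>G. if x \<in> B l \<union> B m then 1 - q else 1)"
      using q by (intro prod.cong refl) (auto simp: g_def)
    also have "\<dots> = (1-q) ^ card (G \<inter> (B l \<union> B m))" by (rule prod_if_const[OF fG])
    also have "G \<inter> (B l \<union> B m) = B l \<union> B m" using BG that by auto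
    also have "(1-q) ^ card (B l \<union> B m) = (if l = m then r else r^2)"
    proof (cases "l = m")
      case True then show ?thesis using cB that by (simp add: r_def)
    next
      case False
      have "card (B l \<union> B m) = n + n"
        using card_Un_disjoint[of "B l" "B m"] disj[OF that False] cB that BG
          finite_subset[OF _ fG] by auto
      then show ?thesis using False by (simp add: r_def power_add power2_eq_square)
    qed
    finally show ?thesis .
  qed
  have EZ: "measure_pmf.expectation M (Z l) = r" if "l \<in> U" for l
    using EZZ[OF that that] Zind[OF that]
    by (metis (no_types, lifting) Bochner_Integration.integral_cong mult_cancel_left1 mult_zero_left)
  have EX: "measure_pmf.expectation M X = real (card U) * r"
    unfolding X_def by (subst Bochner_Integration.integral_sum) (auto simp: integ EZ)
  have sq: "(X f - real (card U) * r)\<^sup>2 = (\<Sum>l\<in>U. \<Sum>m\<in>U. (Z l f - r) * (Z m f - r))" for f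
  proof -
    have "X f - real (card U) * r = (\<Sum>l\<in>U. Z l f - r)"
      by (simp add: X_def sum_subtractf)
    then show ?thesis by (simp add: power2_eq_square sum_product)
  qed
  have "measure_pmf.variance M X = (\<Sum>l\<in>U. \<Sum>m\<in>U. measure_pmf.expectation M (\<lambda>f. (Z l f - r) * (Z m f - r)))"
    unfolding EX sq
    by (subst Bochner_Integration.integral_sum, simp add: integ)+ simp
  also have "\<dots> = (\<Sum>l\<in>U. \<Sum>m\<in>U. (if l = m then r else r^2) - r^2)"
  proof (intro sum.cong refl)
    fix l m assume lm: "l \<in> U" "m \<in> U"
    have "(\<lambda>f. (Z l f - r) * (Z m f - r)) = (\<lambda>f. Z l f * Z m f - r * Z l f - r * Z m f + r * r)"
      by (auto simp: algebra_simps)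
    then show "measure_pmf.expectation M (\<lambda>f. (Z l f - r) * (Z m f - r)) = (if l = m then r else r^2) - r^2"
      using EZZ[OF lm] EZ[OF lm(1)] EZ[OF lm(2)]
      by (simp add: integ Bochner_Integration.integral_diff Bochner_Integration.integral_add power2_eq_square)
  qed
  also have "\<dots> = (\<Sum>l\<in>U. \<Sum>m\<in>U. if l = m then r - r^2 else 0)"
    by (intro sum.cong refl) auto
  also have "\<dots> = (\<Sum>l\<in>U. r - r^2)"
    using fU by simp
  also have "\<dots> \<le> real (card U)"
  proof -
    have "r - r^2 \<le> 1" using r01 by (simp add: power2_eq_square) (smt (verit) mult_nonneg_nonneg)
    then show ?thesis by (simp add: mult_left_le)
  qed
  finally have var: "measure_pmf.variance M X \<le> real (card U)" .
  have "measure_pmf.prob M {f. real (card U) * r + t \<le> X f}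
        \<le> measure_pmf.prob M {f \<in> space (measure_pmf M). t \<le> \<bar>X f - measure_pmf.expectation M X\<bar>}"
    by (rule measure_pmf.finite_measure_mono) (auto simp: EX)
  also have "\<dots> \<le> measure_pmf.variance M X / t\<^sup>2"
    by (rule measure_pmf.Chebyshev_inequality) (auto simp: integ t)
  also have "\<dots> \<le> real (card U) / t\<^sup>2"
    using var t by (simp add: divide_right_mono)
  finally show ?thesis by (simp add: M_def r_def Xcard)
qed



context
  fixes N p n :: nat
  assumes Nnp: "N = n * p" and p0: "p > 0"
begin

lemma real_eq1: "real N * real l / real p = real (n * l)"
  using p0 by (simp add: Nnp field_simps)

lemma real_eq3: "real N / real p = real n"
  using p0 by (simp add: Nnp field_simps)

lemma ach_iff: "achieved N p S l \<longleftrightarrow> (\<exists>x\<in>S. n*l \<le> x \<and> x \<le> n*l+n)"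
  unfolding achieved_def real_eq3 real_eq1 of_nat_add[symmetric] of_nat_le_iff by (rule refl)

lemma lower_eq: "lower_bd N p S l = Max ({x\<in>S. x < n*l} \<union> {1})"
  unfolding lower_bd_def real_eq1 of_nat_less_iff by (rule refl)

lemma upper_eq: "upper_bd N p S l = Min ({x\<in>S. x > n*l+n} \<union> {N})"
  unfolding upper_bd_def real_eq3 real_eq1 of_nat_add[symmetric] of_nat_less_iff by (rule refl)

lemma unach_mono: "S \<subseteq> S' \<Longrightarrow> unachieved N p S' \<subseteq> unachieved N p S"
  unfolding unachieved_def ach_iff by blast

lemma finite_gamma: "finite (gamma N p S)"
  unfolding gamma_def unachieved_def by auto

lemma block_sub:
  assumes fS: "finite S" and l: "l \<in> unachieved N p S" and n1: "n \<ge> 1"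
  shows "{n*l..<n*l+n} \<subseteq> gamma N p S"
proof -
  from l have l1: "1 \<le> l" "l < p" by (auto simp: unachieved_def)
  have "lower_bd N p S l \<le> n*l"
    unfolding lower_eq using fS l1 n1
    by (subst Max_le_iff) (auto intro: order.trans[of 1 l "n*l"])
  moreover have "n*l+n \<le> upper_bd N p S l"
  proof -
    have "n*l+n \<le> N" using l1 by (simp add: Nnp) (metis Suc_leI mult.commute mult_Suc_right mult_le_mono2 add.commute)
    then show ?thesis unfolding upper_eq using fS by (subst Min_ge_iff) auto
  qed
  ultimately show ?thesis unfolding gamma_def using l by force
qed

lemma gamma_sub:
  assumes fS: "finite S" and n1: "n \<ge> 1"
  shows "gamma N p S \<subseteq> (\<Union>l\<in>unachieved N p S. {n*(l-1)..n*(l+2)})"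
proof
  fix x assume "x \<in> gamma N p S"
  then obtain l where l: "l \<in> unachieved N p S" and xl: "lower_bd N p S l \<le> x" "x \<le> upper_bd N p S l"
    unfolding gamma_def by auto
  from l have l1: "1 \<le> l" "l < p" and nach: "\<not> (\<exists>s\<in>S. n*l \<le> s \<and> s \<le> n*l+n)"
    by (auto simp: unachieved_def ach_iff)
  have Lge: "s \<le> lower_bd N p S l" if "s \<in> S" "s < n*l" for s
    unfolding lower_eq using fS that by (intro Max_ge) auto
  have Ule: "upper_bd N p S l \<le> s" if "s \<in> S" "s > n*l+n" for s
    unfolding upper_eq using fS that by (intro Min_le) auto
  have UN: "upper_bd N p S l \<le> N"
    unfolding upper_eq using fS by (intro Min_le) auto
  show "x \<in> (\<Union>l\<in>unachieved N p S. {n*(l-1)..n*(l+2)})"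
  proof (cases "x < n*l")
    case True
    define b where "b = x div n"
    have bx: "n*b \<le> x" "x < n*(b+1)" using n1 unfolding b_def
      by (simp_all add: mult.commute) (metis Suc_eq_plus1 dividend_less_div_times mult.commute n1 zero_less_one_class.zero_le_one less_le_trans[OF zero_less_one n1] div_mult_mod_eq less_add_Suc1 mod_less_divisor mult_Suc_right add_less_cancel_left)
    have bl: "b < l" using True bx by (metis leD leI le_less_trans mult_le_mono2 Suc_eq_plus1 Suc_le_eq)
    have "b+1 \<in> unachieved N p S"
      unfolding unachieved_def ach_iff
    proof (safe)
      show "b+1 \<in> {1..<p}" using bl l1 by auto
    next
      fix s assume s: "s \<in> S" "n*(b+1) \<le> s" "s \<le> n*(b+1)+n"
      show False
      proof (cases "s < n*l")
        case True
        then have "s \<le> x" using Lge[OF s(1)] xl by simp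
        then show False using s bx by simp
      next
        case False
        have "s \<le> n*l+n" using s(3) bl
          by (metis add_mult_distrib2 le_trans mult.right_neutral add_le_mono1 mult_le_mono2 Suc_eq_plus1 Suc_leI)
        then show False using nach s False by auto
      qed
    qed
    moreover have "x \<in> {n*((b+1)-1)..n*((b+1)+2)}" using bx by auto
    ultimately show ?thesis by blast
  next
    case False
    note F1 = False
    show ?thesis
    proof (cases "x \<le> n*l+n")
      case True
      have a1: "n*(l-1) \<le> n*l" by simp
      have a2: "n*l \<le> x" using F1 by simp
      have a3: "x \<le> n*(l+2)" using True by simp
      have "x \<in> {n*(l-1)..n*(l+2)}" unfolding atLeastAtMost_iff using le_trans[OF a1 a2] a3 by blast
      then show ?thesis using l by blast
    next
      case False
      define b where "b = (x - 1) div n"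
      have n0: "0 < n" using n1 by simp
      have d1: "n * b \<le> x - 1" unfolding b_def by (rule times_div_less_eq_dividend)
      have d2: "x - 1 < n + n * b" unfolding b_def by (rule dividend_less_times_div[OF n0])
      have x0: "x \<ge> 1" using False by simp
      have bx1: "n*b < x" using d1 x0 by simp
      have bx2: "x \<le> n*b + n" using d2 x0 by simp
      have "n*l + n < n*b + n" using False bx2 by linarith
      then have "n*l < n*b" by linarith
      then have bl0: "l < b" by (meson mult_less_cancel1)
      then have bl: "b \<ge> l+1" by simp
      have xN: "x \<le> N" using xl UN by simp
      have "n*b < n*p" using bx1 xN unfolding Nnp by linarith
      then have bp: "b < p" by (meson mult_less_cancel1)
      have e1: "n*(b-1) + n = n*b" using bl by (metis Suc_diff_1 add.commute less_le_trans zero_less_one l1(1) le_add1 Suc_le_eq mult_Suc_right bl0 zero_less_iff_neq_zero gr0_conv_Suc not_less0)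
      have "l \<le> b-1" using bl by linarith
      then have e2: "n*l \<le> n*(b-1)" by (rule mult_le_mono2)
      have "b-1 \<in> unachieved N p S"
        unfolding unachieved_def ach_iff
      proof (safe)
        show "b-1 \<in> {1..<p}" using bl bp l1 by auto
      next
        fix s assume s: "s \<in> S" "n*(b-1) \<le> s" "s \<le> n*(b-1)+n"
        have snb: "s \<le> n*b" using s(3) e1 by simp
        have snl: "n*l \<le> s" using le_trans[OF e2 s(2)] .
        show False
        proof (cases "s \<le> n*l+n")
          case True then show False using nach s snl by auto
        next
          case False
          then have "upper_bd N p S l \<le> s" using Ule[OF s(1)] by simp
          then show False using xl snb bx1 by simp
        qed
      qed
      moreover have "x \<in> {n*((b-1)-1)..n*((b-1)+2)}"
      proof -
        have f1: "n*((b-1)-1) \<le> n*b" by simp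
        have f2: "(b-1)+2 = b+1" using bl by simp
        have "x \<le> n*(b+1)" using bx2 by simp
        moreover have "n*((b-1)-1) \<le> x" using le_trans[OF f1 less_imp_le[OF bx1]] .
        ultimately show ?thesis using f2 by (simp only: atLeastAtMost_iff)
      qed
      ultimately show ?thesis by blast
    qed
  qed
qed

lemma card_gamma:
  assumes fS: "finite S" and n1: "n \<ge> 1"
  shows "card (gamma N p S) \<le> 4 * n * card (unachieved N p S)"
proof -
  have fU: "finite (unachieved N p S)" unfolding unachieved_def by auto
  have "card (gamma N p S) \<le> card (\<Union>l\<in>unachieved N p S. {n*(l-1)..n*(l+2)})"
    by (rule card_mono[OF _ gamma_sub[OF fS n1]]) (use fU in auto)
  also have "\<dots> \<le> (\<Sum>l\<in>unachieved N p S. card {n*(l-1)..n*(l+2)})"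
    by (rule card_UN_le[OF fU])
  also have "\<dots> \<le> (\<Sum>l\<in>unachieved N p S. 4 * n)"
  proof (rule sum_mono)
    fix l assume "l \<in> unachieved N p S"
    then have "l \<ge> 1" by (auto simp: unachieved_def)
    then have "n*(l+2) = n*(l-1) + 3*n" by (simp add: algebra_simps)
    then show "card {n*(l-1)..n*(l+2)} \<le> 4 * n" using n1 by simp
  qed
  finally show ?thesis by (simp add: mult.commute)
qed

end


lemma iter_log_le:
  "\<forall>y::real. y \<le> 2^m \<longrightarrow> (\<exists>j\<le>m. ((\<lambda>y. log 2 y) ^^ j) y \<le> 1)"
proof (induction m)
  case 0 then show ?case by auto
next
  case (Suc m)
  show ?case
  proof (intro allI impI)
    fix y :: real assume y: "y \<le> 2 ^ Suc m"
    show "\<exists>j\<le>Suc m. ((\<lambda>y. log 2 y) ^^ j) y \<le> 1"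
    proof (cases "y \<le> 1")
      case True then show ?thesis by (intro exI[of _ 0]) auto
    next
      case False
      then have ly: "log 2 y \<le> real (Suc m)"
      proof -
        have "2 powr real (Suc m) = 2 ^ Suc m" by (rule powr_realpow) simp
        then have "y \<le> 2 powr real (Suc m)" using y by simp
        then show ?thesis using False by (subst log_le_iff) auto
      qed
      show ?thesis
      proof (cases "m = 0")
        case True
        then show ?thesis using ly by (intro exI[of _ 1]) auto
      next
        case False
        have "real (Suc m) \<le> 2 ^ m"
        proof -
          have "Suc m \<le> 2 ^ m" by (rule Suc_leI[OF less_exp])
          then show ?thesis by (metis of_nat_le_iff of_nat_numeral of_nat_power)
        qed
        then obtain j where "j \<le> m" "((\<lambda>y. log 2 y) ^^ j) (log 2 y) \<le> 1"
          using Suc.IH ly by (meson order.trans)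
        then show ?thesis by (intro exI[of _ "Suc j"]) (simp add: funpow_Suc_right del: funpow.simps)
      qed
    qed
  qed
qed

lemma logstar_le: "x \<le> 2 ^ m \<Longrightarrow> logstar x \<le> m"
proof -
  assume "x \<le> 2 ^ m"
  then obtain j where j: "j \<le> m" "((\<lambda>y. log 2 y) ^^ j) x \<le> 1" using iter_log_le by blast
  then have "logstar x \<le> j" unfolding logstar_def by (intro Least_le) auto
  then show ?thesis using j by simp
qed

lemma logstar_ge1: "x > 1 \<Longrightarrow> logstar x \<ge> 1"
proof -
  assume x: "x > 1"
  obtain m where "x \<le> 2 ^ m" using real_arch_pow[of 2 x] by (auto intro: less_imp_le)
  then obtain j where j: "((\<lambda>y. log 2 y) ^^ j) x \<le> 1" using iter_log_le by blast
  then have "((\<lambda>y. log 2 y) ^^ logstar x) x \<le> 1" unfolding logstar_def by (rule LeastI)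
  then show ?thesis using x by (cases "logstar x") auto
qed

lemma logstar_nat_le: "p \<ge> 1 \<Longrightarrow> real (logstar (real p)) \<le> log 2 (real p) + 1"
proof -
  assume p: "p \<ge> 1"
  define m where "m = nat \<lceil>log 2 (real p)\<rceil>"
  have lg: "log 2 (real p) \<ge> 0" using p by simp
  have "real p \<le> 2 ^ m"
  proof -
    have "real p = 2 powr (log 2 (real p))" using p by simp
    also have "\<dots> \<le> 2 powr (real m)" unfolding m_def using lg by (intro powr_mono) auto
    finally show ?thesis by (simp add: powr_realpow)
  qed
  then have "logstar (real p) \<le> m" by (rule logstar_le)
  moreover have "real m \<le> log 2 (real p) + 1" unfolding m_def using lg by linarith
  ultimately show ?thesis by linarith
qed



lemma bern_aux:
  fixes q :: real assumes "0 \<le> q" "q \<le> 1"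
  shows "(1-q)^n * (1 + real n * q) \<le> 1"
proof -
  have "1 + real n * q \<le> (1+q)^n" by (rule Bernoulli_inequality) (use assms in auto)
  then have "(1-q)^n * (1 + real n * q) \<le> (1-q)^n * (1+q)^n"
    using assms by (intro mult_left_mono) auto
  also have "\<dots> = (1 - q^2)^n" by (simp add: power_mult_distrib[symmetric] power2_eq_square algebra_simps)
  also have "\<dots> \<le> 1" using assms by (intro power_le_one) (auto simp: power_le_one)
  finally show ?thesis .
qed

lemma round_step:
  fixes N p n :: nat and Lr a :: real
  assumes Nnp: "N = n*p" and n1: "n \<ge> 1" and p1: "p \<ge> 1" and Ldef: "Lr = real (logstar (real p))"
    and L0: "Lr > 0" and fS: "finite S"
    and good: "real (card (unachieved N p S)) \<le> a \<or> real (card (unachieved N p S)) < p / Lr"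
  shows "measure_pmf.prob (hp_round N p S)
     {S'. \<not> (real (card (unachieved N p S')) \<le> a - p/(4*Lr) \<or> real (card (unachieved N p S')) < p/Lr)}
     \<le> 64 * Lr^2 / p"
proof -
  have p0: "p > 0" using p1 by simp
  define G where "G = gamma N p S"
  define q where "q = min 1 (3 * real p / (real (card G) * Lr))"
  define M where "M = Pi_pmf G False (\<lambda>_. bernoulli_pmf q)"
  define \<phi> where "\<phi> = (\<lambda>f. S \<union> {x \<in> G. f x})"
  define U where "U = unachieved N p S"
  define u where "u = card U"
  define bad where "bad = {S'. \<not> (real (card (unachieved N p S')) \<le> a - p/(4*Lr) \<or> real (card (unachieved N p S')) < p/Lr)}"
  have hp: "hp_round N p S = map_pmf \<phi> M"
    unfolding hp_round_def Let_def M_def \<phi>_def q_def G_def Ldef by simp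
  have fU: "finite U" unfolding U_def unachieved_def by auto
  have fG: "finite G" unfolding G_def by (rule finite_gamma[OF Nnp p0])
  have mono: "unachieved N p (\<phi> f) \<subseteq> U" for f
    unfolding U_def \<phi>_def by (rule unach_mono[OF Nnp p0]) auto
  have cmono: "card (unachieved N p (\<phi> f)) \<le> u" for f
    unfolding u_def by (rule card_mono[OF fU mono])
  have up: "real u \<le> real p"
  proof -
    have "U \<subseteq> {1..<p}" unfolding U_def unachieved_def by auto
    then have "u \<le> card {1..<p}" unfolding u_def by (intro card_mono) auto
    then show ?thesis by simp
  qed
  have rhs0: "0 \<le> 64 * Lr^2 / p" by simp
  show ?thesis
  proof (cases "real u < p / Lr")
    case True
    have "\<phi> -` bad = {}"
    proof -
      have "real (card (unachieved N p (\<phi> f))) < p / Lr" for f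
        using cmono[of f] True by (meson le_less_trans of_nat_le_iff)
      then show ?thesis unfolding bad_def by auto
    qed
    then show ?thesis using rhs0 unfolding hp bad_def[symmetric] by simp
  next
    case False
    then have uL: "p / Lr \<le> real u" by simp
    have ua: "real u \<le> a" using good False unfolding u_def U_def by auto
    have pL0: "p / Lr > 0" using p0 L0 by simp
    have uLp: "real u * Lr \<ge> p" using uL L0 by (simp add: field_simps)
    have u0: "u > 0" using uL pL0 by linarith
    then obtain l0 where l0: "l0 \<in> U" by (metis card.empty less_irrefl u_def equals0I)
    define B where "B = (\<lambda>l::nat. {n*l..<n*l+n})"
    have BG: "B l \<subseteq> G" if "l \<in> U" for l
      unfolding B_def G_def using block_sub[OF Nnp p0 fS _ n1] that U_def by auto
    have cB: "card (B l) = n" for l unfolding B_def by simp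
    have disj: "B l \<inter> B m = {}" if "l \<noteq> m" for l m
    proof -
      { fix x assume x: "x \<in> B l" "x \<in> B m"
        have "x div n = l" using x(1) n1 unfolding B_def
          by (intro div_nat_eqI) auto
        moreover have "x div n = m" using x(2) n1 unfolding B_def
          by (intro div_nat_eqI) auto
        ultimately have False using that by simp }
      then show ?thesis by blast
    qed
    have q01: "0 \<le> q" "q \<le> 1" unfolding q_def using L0 by auto
    define t where "t = p / (8 * Lr)"
    have t0: "t > 0" unfolding t_def using p0 L0 by simp
    define r where "r = (1-q)^n"
    have key: "real u * r + t \<le> a - p/(4*Lr)"
    proof (cases "q = 1")
      case True
      then have "r = 0" unfolding r_def using n1 by simp
      moreover have "t + p/(4*Lr) \<le> p / Lr" unfolding t_def using p0 L0 by (simp add: field_simps)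
      ultimately show ?thesis using uL ua by simp
    next
      case False
      have cG0: "card G > 0"
      proof -
        have "n \<le> card G" using card_mono[OF fG BG[OF l0]] cB[of l0] by simp
        then show ?thesis using n1 by simp
      qed
      have cG: "real (card G) \<le> 4 * real n * real u"
      proof -
        have "card G \<le> 4 * n * u" unfolding G_def u_def U_def by (rule card_gamma[OF Nnp p0 fS n1])
        then show ?thesis by (metis of_nat_le_iff of_nat_mult of_nat_numeral)
      qed
      have qv: "q = 3 * real p / (real (card G) * Lr)" using False unfolding q_def by (auto simp: min_def split: if_splits)
      define z where "z = 3 * real p / (4 * real u * Lr)"
      have z0: "z \<ge> 0" unfolding z_def using L0 by simp
      have nqz: "real n * q \<ge> z"
      proof -
        have "z = 3 * real p * real n / ((4 * real n * real u) * Lr)" unfolding z_def using n1 by (simp add: field_simps)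
        also have "\<dots> \<le> 3 * real p * real n / (real (card G) * Lr)"
          using cG cG0 L0 by (intro divide_left_mono mult_right_mono) auto
        also have "\<dots> = real n * q" unfolding qv by simp
        finally show ?thesis .
      qed
      have r0: "r \<ge> 0" unfolding r_def using q01 by simp
      have "r * (1 + z) \<le> r * (1 + real n * q)" using nqz r0 by (intro mult_left_mono) auto
      also have "\<dots> \<le> 1" unfolding r_def by (rule bern_aux[OF q01])
      finally have rz: "r * (1 + z) \<le> 1" .
      have z34: "z \<le> 3/4" unfolding z_def using uLp p0 L0 u0 by (simp add: field_simps)
      have uz: "real u * z = 3 * p / (4 * Lr)" unfolding z_def using u0 by (simp add: field_simps)
      have "real u * (r * (1 + z)) \<le> real u * 1" using rz by (intro mult_left_mono) auto
      then have "real u * r \<le> real u / (1 + z)" using z0 by (simp add: field_simps)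
      also have "\<dots> = real u - real u * z / (1 + z)" using z0 by (simp add: field_simps)
      also have "\<dots> \<le> real u - (3 * p / (4 * Lr)) * (4/7)"
      proof -
        have c0: "0 \<le> 3 * p / (4 * Lr)" using L0 by simp
        have "(4::real)/7 \<le> 1 / (1 + z)" using z34 z0 by (simp add: field_simps)
        then have "(3 * p / (4 * Lr)) * (4/7) \<le> (3 * p / (4 * Lr)) * (1 / (1 + z))"
          by (rule mult_left_mono[OF _ c0])
        then have "(3 * p / (4 * Lr)) * (4/7) \<le> (3 * p / (4 * Lr)) / (1 + z)" by simp
        then show ?thesis unfolding uz by simp
      qed
      finally have "real u * r \<le> real u - (3 * p / (4 * Lr)) * (4/7)" .
      moreover have "(3 * p / (4 * Lr)) * (4/7) \<ge> t + p/(4*Lr)" unfolding t_def using p0 L0 by (simp add: field_simps)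
      ultimately show ?thesis using ua by simp
    qed
    have sub: "\<phi> -` bad \<subseteq> {f. real (card U) * (1-q)^n + t \<le> real (card {l\<in>U. \<forall>x\<in>B l. \<not> f x})}"
    proof
      fix f assume "f \<in> \<phi> -` bad"
      then have big: "real (card (unachieved N p (\<phi> f))) > a - p/(4*Lr)" unfolding bad_def by auto
      have "unachieved N p (\<phi> f) \<subseteq> {l\<in>U. \<forall>x\<in>B l. \<not> f x}"
      proof
        fix l assume l: "l \<in> unachieved N p (\<phi> f)"
        have lU: "l \<in> U" using mono l by auto
        have "\<not> f x" if "x \<in> B l" for x
        proof
          assume fx: "f x"
          have "x \<in> \<phi> f" unfolding \<phi>_def using BG[OF lU] that fx by auto
          moreover have "n*l \<le> x \<and> x \<le> n*l+n" using that unfolding B_def by auto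
          ultimately have "achieved N p (\<phi> f) l" unfolding ach_iff[OF Nnp p0] by blast
          then show False using l unfolding unachieved_def by auto
        qed
        then show "l \<in> {l\<in>U. \<forall>x\<in>B l. \<not> f x}" using lU by auto
      qed
      then have "card (unachieved N p (\<phi> f)) \<le> card {l\<in>U. \<forall>x\<in>B l. \<not> f x}"
        by (intro card_mono) (use fU in auto)
      then show "f \<in> {f. real (card U) * (1-q)^n + t \<le> real (card {l\<in>U. \<forall>x\<in>B l. \<not> f x})}"
        using big key unfolding u_def r_def by simp
    qed
    have "measure_pmf.prob (hp_round N p S) bad = measure_pmf.prob M (\<phi> -` bad)" unfolding hp by simp
    also have "\<dots> \<le> measure_pmf.prob M {f. real (card U) * (1-q)^n + t \<le> real (card {l\<in>U. \<forall>x\<in>B l. \<not> f x})}"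
      by (rule measure_pmf.finite_measure_mono[OF sub]) simp
    also have "\<dots> \<le> real (card U) / t^2"
      unfolding M_def by (rule cheb_core[OF fG fU BG cB disj q01 t0])
    also have "\<dots> \<le> real p / t^2" using up t0 unfolding u_def by (simp add: divide_right_mono)
    also have "\<dots> = 64 * Lr^2 / p" unfolding t_def using p0 L0 by (simp add: field_simps power2_eq_square)
    finally show ?thesis unfolding bad_def .
  qed
qed



lemma finite_gamma': "finite (gamma N p S)"
  unfolding gamma_def unachieved_def by auto

lemma rounds_fin: "S \<in> set_pmf (hp_rounds N p j) \<Longrightarrow> finite S"
proof (induction j arbitrary: S)
  case 0 then show ?case by simp
next
  case (Suc j)
  then obtain S0 where S0: "S0 \<in> set_pmf (hp_rounds N p j)" "S \<in> set_pmf (hp_round N p S0)" by auto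
  then have "finite S0" using Suc.IH by blast
  moreover obtain f where "S = S0 \<union> {x \<in> gamma N p S0. f x}"
    using S0(2) unfolding hp_round_def Let_def by auto
  ultimately show ?case using finite_gamma'[of N p S0] by auto
qed

lemma rounds_bound:
  fixes N p n :: nat and Lr :: real
  assumes Nnp: "N = n*p" and n1: "n \<ge> 1" and p1: "p \<ge> 1" and Ldef: "Lr = real (logstar (real p))"
    and L0: "Lr > 0"
  shows "measure_pmf.prob (hp_rounds N p j)
     {S. \<not> (real (card (unachieved N p S)) \<le> p - j * (p/(4*Lr)) \<or> real (card (unachieved N p S)) < p/Lr)}
     \<le> j * (64 * Lr^2 / p)"
proof (induction j)
  case 0
  have "card (unachieved N p {}) \<le> card {1..<p}" unfolding unachieved_def by (intro card_mono) auto
  then have "real (card (unachieved N p {})) \<le> p" by simp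
  then show ?case by simp
next
  case (Suc j)
  have "measure_pmf.prob (hp_rounds N p (Suc j))
     {S. \<not> (real (card (unachieved N p S)) \<le> p - Suc j * (p/(4*Lr)) \<or> real (card (unachieved N p S)) < p/Lr)}
     \<le> measure_pmf.prob (hp_rounds N p j)
     {S. \<not> (real (card (unachieved N p S)) \<le> p - j * (p/(4*Lr)) \<or> real (card (unachieved N p S)) < p/Lr)}
      + 64 * Lr^2 / p"
    unfolding hp_rounds.simps
  proof (rule bind_bound)
    fix S assume S: "S \<in> set_pmf (hp_rounds N p j)"
      "S \<notin> {S. \<not> (real (card (unachieved N p S)) \<le> p - j * (p/(4*Lr)) \<or> real (card (unachieved N p S)) < p/Lr)}"
    have eq: "real p - real (Suc j) * (real p / (4 * Lr)) = (real p - real j * (real p / (4 * Lr))) - p/(4*Lr)"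
      by (simp add: algebra_simps add_divide_distrib)
    show "measure_pmf.prob (hp_round N p S)
     {S. \<not> (real (card (unachieved N p S)) \<le> p - Suc j * (p/(4*Lr)) \<or> real (card (unachieved N p S)) < p/Lr)}
      \<le> 64 * Lr^2 / p"
      unfolding eq by (rule round_step[OF Nnp n1 p1 Ldef L0 rounds_fin[OF S(1)]]) (use S(2) in auto)
  qed simp
  also have "\<dots> \<le> j * (64 * Lr^2 / p) + 64 * Lr^2 / p" using Suc by simp
  also have "\<dots> = Suc j * (64 * Lr^2 / p)" by (simp add: algebra_simps add_divide_distrib)
  finally show ?case .
qed

lemma lim_aux: "((\<lambda>p::nat. 1 - 256 * (log 2 (real p) + 1)^3 / real p) \<longlongrightarrow> 1) at_top"
  by real_asymp

lemma lower_aux: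
  fixes N :: "nat \<Rightarrow> nat" and p :: nat
  assumes hN: "\<forall>p>0. p dvd N p \<and> N p > 0" and p2: "p \<ge> 2"
  shows "1 - 256 * (log 2 (real p) + 1)^3 / real p \<le>
    measure_pmf.prob (hp_rounds (N p) p (nat \<lceil>4 * real (logstar (real p))\<rceil>))
        {S. real (card (unachieved (N p) p S)) < real p / real (logstar (real p))}"
proof -
  have p0: "p > 0" "p \<ge> 1" using p2 by auto
  define n where "n = N p div p"
  have Nnp: "N p = n * p" unfolding n_def using hN p0 by auto
  have "N p > 0" using hN p0 by auto
  then have "n \<noteq> 0" using Nnp by auto
  then have n1: "n \<ge> 1" by simp
  define Lr where "Lr = real (logstar (real p))"
  have L1: "Lr \<ge> 1" unfolding Lr_def using logstar_ge1[of "real p"] p2 by simp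
  then have L0: "Lr > 0" by simp
  have Lle: "Lr \<le> log 2 (real p) + 1" unfolding Lr_def by (rule logstar_nat_le[OF p0(2)])
  define k where "k = nat \<lceil>4 * real (logstar (real p))\<rceil>"
  have k: "k = 4 * logstar (real p)"
  proof -
    have "4 * real (logstar (real p)) = real (4 * logstar (real p))" by simp
    then show ?thesis unfolding k_def by (simp only: ceiling_of_nat nat_int)
  qed
  have kr: "real k = 4 * Lr" unfolding k Lr_def by simp
  define bad where "bad = {S. \<not> (real (card (unachieved (N p) p S)) \<le> p - k * (p/(4*Lr)) \<or> real (card (unachieved (N p) p S)) < p/Lr)}"
  have pb: "measure_pmf.prob (hp_rounds (N p) p k) bad \<le> k * (64 * Lr^2 / p)"
    unfolding bad_def by (rule rounds_bound[OF Nnp n1 p0(2) Lr_def L0])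
  have z: "real p - k * (p/(4*Lr)) = 0" unfolding kr using L0 by simp
  have sub: "UNIV - bad \<subseteq> {S. real (card (unachieved (N p) p S)) < real p / Lr}"
  proof
    fix S assume "S \<in> UNIV - bad"
    moreover have "real p / Lr > 0" using p0 L0 by simp
    ultimately show "S \<in> {S. real (card (unachieved (N p) p S)) < real p / Lr}"
      unfolding bad_def z by auto
  qed
  have "1 - 256 * (log 2 (real p) + 1)^3 / real p \<le> 1 - 256 * Lr^3 / real p"
  proof -
    have "Lr^3 \<le> (log 2 (real p) + 1)^3" using Lle L0 by (intro power_mono) auto
    then show ?thesis using p0 by (simp add: divide_right_mono)
  qed
  also have "1 - 256 * Lr^3 / real p = 1 - k * (64 * Lr^2 / p)"
    unfolding kr by (simp add: power3_eq_cube power2_eq_square)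
  also have "\<dots> \<le> 1 - measure_pmf.prob (hp_rounds (N p) p k) bad" using pb by simp
  also have "\<dots> = measure_pmf.prob (hp_rounds (N p) p k) (UNIV - bad)"
    using measure_pmf.prob_compl[of bad "hp_rounds (N p) p k"] by simp
  also have "\<dots> \<le> measure_pmf.prob (hp_rounds (N p) p k) {S. real (card (unachieved (N p) p S)) < real p / Lr}"
    by (rule measure_pmf.finite_measure_mono[OF sub]) simp
  finally show ?thesis unfolding k_def Lr_def .
qed

theorem lemma2p4:
  "\<exists>C>0. \<forall>N :: nat \<Rightarrow> nat. (\<forall>p>0. p dvd N p \<and> N p > 0) \<longrightarrow>
     ((\<lambda>p. measure_pmf.prob (hp_rounds (N p) p (nat \<lceil>C * real (logstar (real p))\<rceil>))
        {S. real (card (unachieved (N p) p S)) < real p / real (logstar (real p))})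
      \<longlongrightarrow> 1) at_top"
proof (intro exI[of _ 4] conjI allI impI)
  fix N :: "nat \<Rightarrow> nat"
  assume hN: "\<forall>p>0. p dvd N p \<and> N p > 0"
  show "((\<lambda>p. measure_pmf.prob (hp_rounds (N p) p (nat \<lceil>4 * real (logstar (real p))\<rceil>))
        {S. real (card (unachieved (N p) p S)) < real p / real (logstar (real p))})
      \<longlongrightarrow> 1) at_top"
  proof (rule tendsto_sandwich[OF _ _ lim_aux tendsto_const])
    show "\<forall>\<^sub>F p in at_top. 1 - 256 * (log 2 (real p) + 1)^3 / real p \<le>
      measure_pmf.prob (hp_rounds (N p) p (nat \<lceil>4 * real (logstar (real p))\<rceil>))
        {S. real (card (unachieved (N p) p S)) < real p / real (logstar (real p))}"
      using eventually_ge_at_top[of "2::nat"] by eventually_elim (rule lower_aux[OF hN])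
    show "\<forall>\<^sub>F p in at_top. measure_pmf.prob (hp_rounds (N p) p (nat \<lceil>4 * real (logstar (real p))\<rceil>))
        {S. real (card (unachieved (N p) p S)) < real p / real (logstar (real p))} \<le> 1"
      by simp
  qed
qed simp


end
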